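(* Let $f\ge1$, $\lambda_1=\lambda_2=\dots=\lambda_f<1$ be positive reals, $\mu_1,\dots,\mu_f\in\mathbb C$, $\eta\in(-1,1)$, $u\in\mathbb R$, and $$g(s):=e^{\left(u+i\frac{\pi f}{4}\eta\right)(1/2-s)}\prod_{j=1}^f\Gamma(\lambda_js+\mu_j).$$ Let $\rho$ be a pole of $g$ of order $n$ such that $\Re(\lambda_j\rho+\mu_j)\le0$ for $j=1,\dots,f$ and $$\frac{e^{u/\lambda_1}}{\prod_{j=1}^f\left(|1-\lambda_j\rho-\mu_j|-\lambda_j\right)}<\frac12.$$ Let $c_1,\dots,c_n$ be the coefficients of the polar part of $g$ at $\rho$, so that $g(s+\rho)-\sum_{j=1}^nc_js^{-j}$ is holomorphic at $s=0$. Then $$\left|\sum_{l=1}^\infty\operatorname{Res}_{s=\rho-l/\lambda_1}g(s)\right|<\max_j|c_j|.$$ *)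

theory Defs
  imports "HOL-Complex_Analysis.Complex_Analysis"
begin

definition gfun :: "nat \<Rightarrow> (nat \<Rightarrow> real) \<Rightarrow> (nat \<Rightarrow> complex) \<Rightarrow> real \<Rightarrow> real \<Rightarrow> complex \<Rightarrow> complex" where
  "gfun f lam mu eta u s =
     exp ((complex_of_real u + \<i> * complex_of_real (pi * real f / 4 * eta)) * (1/2 - s)) *
     (\<Prod>j=1..f. Gamma (complex_of_real (lam j) * s + mu j))"

end

theory Submission imports Defs begin

lemma Gamma_minus1: "Gamma (y - 1) = Gamma (y::complex) * inverse (y - 1)"
proof -
  have "rGamma (y - 1) = (y - 1) * rGamma y" using rGamma_plus1[of "y-1"] by simp
  thus ?thesis unfolding Gamma_def by (simp add: inverse_mult_distrib mult.commute)
qed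

lemma Gamma_shift: "Gamma (y - of_nat l) = Gamma (y::complex) * (\<Prod>m=1..l. inverse (y - of_nat m))"
proof (induction l)
  case 0 then show ?case by simp
next
  case (Suc l)
  have "Gamma (y - of_nat (Suc l)) = Gamma ((y - of_nat l) - 1)" by (simp add: algebra_simps)
  also have "\<dots> = Gamma (y - of_nat l) * inverse (y - of_nat (Suc l))"
    by (subst Gamma_minus1) (simp add: algebra_simps)
  finally show ?case using Suc by (simp add: prod.nat_ivl_Suc' mult.assoc)
qed

lemma coeff_single:
  assumes "cmod w > L" "L > 0"
  shows "(deriv^^k) (\<lambda>t. inverse (w + of_real L * t)) 0 / fact k = (- of_real L)^k / w^Suc k"
proof -
  have nz: "w + of_real L * t \<noteq> 0" if "t \<in> ball 0 1" for t
  proof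
    assume "w + of_real L * t = 0"
    hence "w = - (of_real L * t)" by (simp add: eq_neg_iff_add_eq_0)
    hence "cmod w = L * cmod t" using assms by (simp add: norm_mult)
    also have "\<dots> \<le> L" using that assms by (simp add: mult_left_le)
    finally show False using assms by simp
  qed
  have "\<forall>t\<in>ball 0 1. (deriv^^k) (\<lambda>t. inverse (w + of_real L * t)) t = fact k * (- of_real L)^k * inverse (w + of_real L * t)^Suc k"
  proof (induction k)
    case 0 then show ?case by (simp add: divide_inverse)
  next
    case (Suc k)
    show ?case
    proof
      fix t :: complex assume t: "t \<in> ball 0 1"
      have hol: "(\<lambda>t. inverse (w + of_real L * t)) holomorphic_on ball 0 1"
        using nz by (auto intro!: holomorphic_intros)
      have "(deriv^^Suc k) (\<lambda>t. inverse (w + of_real L * t)) t = deriv ((deriv^^k) (\<lambda>t. inverse (w + of_real L * t))) t"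
        by simp
      also have "\<dots> = deriv (\<lambda>t. fact k * (- of_real L)^k * inverse (w + of_real L * t)^Suc k) t"
        apply (rule complex_derivative_transform_within_open[where s="ball 0 1"])
        using Suc.IH t nz by (auto intro!: holomorphic_intros holomorphic_higher_deriv hol)
      also have "\<dots> = fact (Suc k) * (- of_real L)^Suc k * inverse (w + of_real L * t)^Suc (Suc k)"
      proof (rule DERIV_imp_deriv)
        have v: "w + of_real L * t \<noteq> 0" using nz[OF t] .
        have d1: "((\<lambda>t. inverse (w + of_real L * t)) has_field_derivative - of_real L * inverse (w + of_real L * t)^2) (at t)"
          using v by (auto intro!: derivative_eq_intros simp: power2_eq_square field_simps)
        have d2: "((\<lambda>t. inverse (w + of_real L * t)^Suc k) has_field_derivative of_nat (Suc k) * (- of_real L * inverse (w + of_real L * t)^2 * inverse (w + of_real L * t)^k)) (at t)"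
          using DERIV_power[OF d1, of "Suc k"] by (simp only: diff_Suc_Suc minus_nat.diff_0)
        show "((\<lambda>t. fact k * (- of_real L)^k * inverse (w + of_real L * t)^Suc k) has_field_derivative fact (Suc k) * (- of_real L)^Suc k * inverse (w + of_real L * t)^Suc (Suc k)) (at t)"
          using DERIV_cmult[OF d2, of "fact k * (- of_real L)^k"]
          by (simp add: power2_eq_square algebra_simps)
      qed
      finally show "(deriv^^Suc k) (\<lambda>t. inverse (w + of_real L * t)) t = fact (Suc k) * (- of_real L)^Suc k * inverse (w + of_real L * t)^Suc (Suc k)" .
    qed
  qed
  then show ?thesis by (simp add: divide_inverse power_inverse)
qed

lemma conv_bound:
  fixes x y :: "nat \<Rightarrow> complex"
  shows "(\<Sum>k<N. cmod (\<Sum>i\<le>k. x i * y (k-i))) \<le> (\<Sum>i<N. cmod (x i)) * (\<Sum>j<N. cmod (y j))"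
proof -
  have "(\<Sum>k<N. cmod (\<Sum>i\<le>k. x i * y (k-i))) \<le> (\<Sum>k<N. \<Sum>i\<le>k. cmod (x i) * cmod (y (k-i)))"
    by (intro sum_mono) (metis (no_types, lifting) norm_mult norm_sum sum.cong)
  also have "\<dots> = (\<Sum>(i,j)\<in>{(i,j). i+j < N}. cmod (x i) * cmod (y j))"
    by (rule sum.triangle_reindex[symmetric])
  also have "\<dots> \<le> (\<Sum>(i,j)\<in>{..<N}\<times>{..<N}. cmod (x i) * cmod (y j))"
    by (rule sum_mono2) auto
  also have "\<dots> = (\<Sum>i<N. cmod (x i)) * (\<Sum>j<N. cmod (y j))"
    by (simp add: sum_product sum.cartesian_product)
  finally show ?thesis .
qed

definition cf :: "nat \<Rightarrow> (complex \<Rightarrow> complex) \<Rightarrow> complex" where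
  "cf k F = (deriv^^k) F 0 / fact k"

lemma cf_mult:
  assumes "F holomorphic_on S" "G holomorphic_on S" "open S" "0 \<in> S"
  shows "cf k (\<lambda>t. F t * G t) = (\<Sum>i\<le>k. cf i F * cf (k-i) G)"
proof -
  have "cf k (\<lambda>t. F t * G t) = (\<Sum>i = 0..k. of_nat (k choose i) * (deriv ^^ i) F 0 * (deriv ^^ (k-i)) G 0) / fact k"
    unfolding cf_def using higher_deriv_mult[OF assms] by simp
  also have "\<dots> = (\<Sum>i\<le>k. cf i F * cf (k-i) G)"
    unfolding cf_def atLeast0AtMost sum_divide_distrib
    by (intro sum.cong refl) (simp add: binomial_fact field_simps)
  finally show ?thesis .
qed

lemma nz_lemma:
  assumes "cmod w > L" "L > 0" "t \<in> ball 0 1"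
  shows "w + of_real L * t \<noteq> 0"
proof
  assume "w + of_real L * t = 0"
  hence "w = - (of_real L * t)" by (simp add: eq_neg_iff_add_eq_0)
  hence "cmod w = L * cmod t" using assms by (simp add: norm_mult)
  also have "\<dots> \<le> L" using assms by (simp add: mult_left_le)
  finally show False using assms by simp
qed

lemma prod_holo:
  assumes "L > 0" "\<forall>i\<in>I. cmod (w i) > L"
  shows "(\<lambda>t. \<Prod>i\<in>I. inverse (w i + of_real L * t)) holomorphic_on ball 0 1"
  using assms nz_lemma by (auto intro!: holomorphic_intros)

lemma single_bound:
  assumes "cmod w > L" "L > 0"
  shows "(\<Sum>k<N. cmod (cf k (\<lambda>t. inverse (w + of_real L * t)))) \<le> 1 / (cmod w - L)"
proof -
  define r where "r = L / cmod w"
  have w0: "cmod w > 0" using assms by linarith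
  have r: "0 \<le> r" "r < 1" using assms w0 by (auto simp: r_def)
  have "(\<Sum>k<N. cmod (cf k (\<lambda>t. inverse (w + of_real L * t)))) = (\<Sum>k<N. r^k) / cmod w"
    unfolding cf_def coeff_single[OF assms] sum_divide_distrib
    using assms w0 by (intro sum.cong refl) (auto simp: norm_divide norm_power norm_mult r_def power_divide)
  also have "(\<Sum>k<N. r^k) = (1 - r^N) / (1 - r)" using r by (simp add: sum_gp_strict)
  also have "\<dots> \<le> 1 / (1 - r)" using r by (simp add: divide_right_mono)
  finally have "(\<Sum>k<N. cmod (cf k (\<lambda>t. inverse (w + of_real L * t)))) \<le> 1 / (1 - r) / cmod w"
    using w0 by (simp add: divide_right_mono)
  also have "\<dots> = 1 / (cmod w - L)" using w0 assms by (simp add: r_def divide_simps)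
  finally show ?thesis .
qed

lemma prod_bound:
  assumes "finite I" "L > 0" "\<forall>i\<in>I. cmod (w i) > L"
  shows "(\<Sum>k<N. cmod (cf k (\<lambda>t. \<Prod>i\<in>I. inverse (w i + of_real L * t)))) \<le> (\<Prod>i\<in>I. 1 / (cmod (w i) - L))"
  using assms(1,3)
proof (induction I arbitrary: N rule: finite_induct)
  case empty
  show ?case
  proof (cases N)
    case 0 then show ?thesis by simp
  next
    case (Suc M)
    have "(\<Sum>k<N. cmod (cf k (\<lambda>t. 1))) = (\<Sum>k<N. if k = 0 then 1 else 0)"
      by (intro sum.cong refl) (simp add: cf_def)
    also have "\<dots> = 1" using Suc by (simp add: sum.delta)
    finally show ?thesis by simp
  qed
next
  case (insert x F)
  have hF: "(\<lambda>t. \<Prod>i\<in>F. inverse (w i + of_real L * t)) holomorphic_on ball 0 1"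
    using prod_holo[of L F w] insert assms by auto
  have hx: "(\<lambda>t. inverse (w x + of_real L * t)) holomorphic_on ball 0 1"
    using prod_holo[of L "{x}" w] insert assms by auto
  have eq: "(\<lambda>t. \<Prod>i\<in>insert x F. inverse (w i + of_real L * t)) = (\<lambda>t. inverse (w x + of_real L * t) * (\<Prod>i\<in>F. inverse (w i + of_real L * t)))"
    using insert by simp
  have "(\<Sum>k<N. cmod (cf k (\<lambda>t. \<Prod>i\<in>insert x F. inverse (w i + of_real L * t))))
      = (\<Sum>k<N. cmod (\<Sum>i\<le>k. cf i (\<lambda>t. inverse (w x + of_real L * t)) * cf (k-i) (\<lambda>t. \<Prod>i\<in>F. inverse (w i + of_real L * t))))"
    unfolding eq by (intro sum.cong refl arg_cong[where f=cmod] cf_mult[OF hx hF]) auto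
  also have "\<dots> \<le> (\<Sum>i<N. cmod (cf i (\<lambda>t. inverse (w x + of_real L * t)))) * (\<Sum>j<N. cmod (cf j (\<lambda>t. \<Prod>i\<in>F. inverse (w i + of_real L * t))))"
    by (rule conv_bound)
  also have "\<dots> \<le> (1 / (cmod (w x) - L)) * (\<Prod>i\<in>F. 1 / (cmod (w i) - L))"
    using insert assms single_bound[of L "w x" N]
    by (intro mult_mono) (auto intro: sum_nonneg)
  also have "\<dots> = (\<Prod>i\<in>insert x F. 1 / (cmod (w i) - L))" using insert by simp
  finally show ?case .
qed

lemma dist_shift:
  assumes "Re z \<le> 0" "m \<ge> 1"
  shows "cmod (1 - z) \<le> cmod (z - of_nat m)"
proof -
  have "(1 - Re z)^2 \<le> (real m - Re z)^2"
    by (rule power_mono) (use assms in auto)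
  hence "cmod (1 - z)^2 \<le> cmod (z - of_nat m)^2"
    unfolding cmod_power2 by (simp add: power2_commute)
  thus ?thesis using power2_le_imp_le norm_ge_zero by blast
qed

lemma residue_sum_gen:
  assumes "finite K" "open S" "z \<in> S" "\<And>k. k \<in> K \<Longrightarrow> F k holomorphic_on S - {z}"
  shows "residue (\<lambda>t. \<Sum>k\<in>K. F k t) z = (\<Sum>k\<in>K. residue (F k) z)"
  using assms(1,4)
proof (induction K rule: finite_induct)
  case empty
  then show ?case by (simp add: residue_const)
next
  case (insert x K)
  have "residue (\<lambda>t. \<Sum>k\<in>insert x K. F k t) z = residue (\<lambda>t. F x t + (\<Sum>k\<in>K. F k t)) z"
    using insert by simp
  also have "\<dots> = residue (F x) z + residue (\<lambda>t. \<Sum>k\<in>K. F k t) z"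
    using insert assms(2,3) by (intro residue_add) (auto intro!: holomorphic_on_sum)
  finally show ?case using insert by simp
qed

theorem lemma5p2:
  fixes f n :: nat and lam :: "nat \<Rightarrow> real" and mu :: "nat \<Rightarrow> complex"
    and eta u :: real and \<rho> :: complex and c :: "nat \<Rightarrow> complex"
  assumes f_ge: "f \<ge> 1"
    and lam_eq: "\<forall>j\<in>{1..f}. lam j = lam 1"
    and lam_pos: "0 < lam 1" and lam_lt: "lam 1 < 1"
    and eta: "-1 < eta" "eta < 1"
    and pole: "is_pole (gfun f lam mu eta u) \<rho>"
    and order: "zorder (gfun f lam mu eta u) \<rho> = - int n"
    and re_le: "\<forall>j\<in>{1..f}. Re (complex_of_real (lam j) * \<rho> + mu j) \<le> 0"
    and small: "exp (u / lam 1) / (\<Prod>j=1..f. cmod (1 - complex_of_real (lam j) * \<rho> - mu j) - lam j) < 1/2"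
    and polar: "\<exists>h. h analytic_on {0} \<and>
       (\<forall>\<^sub>F s in at 0. gfun f lam mu eta u (s + \<rho>) - (\<Sum>j=1..n. c j / s ^ j) = h s)"
  shows "summable (\<lambda>l. residue (gfun f lam mu eta u) (\<rho> - of_nat (Suc l) / complex_of_real (lam 1)))
       \<and> cmod (\<Sum>l. residue (gfun f lam mu eta u) (\<rho> - of_nat (Suc l) / complex_of_real (lam 1)))
           < Max ((\<lambda>j. cmod (c j)) ` {1..n})"
proof -
  define L where "L = lam 1"
  define G where "G = gfun f lam mu eta u"
  define A where "A = complex_of_real u + \<i> * complex_of_real (pi * real f / 4 * eta)"
  define z where "z j = of_real L * \<rho> + mu j" for j
  define P where "P = (\<Prod>j=1..f. cmod (1 - z j) - L)"
  define q where "q = exp (u / L) / P"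
  define C where "C = Max ((\<lambda>j. cmod (c j)) ` {1..n})"
  from polar obtain h where h_an: "h analytic_on {0}"
    and h_ev: "\<forall>\<^sub>F s in at 0. G (s + \<rho>) - (\<Sum>j=1..n. c j / s ^ j) = h s"
    unfolding G_def by blast
  from h_an obtain r where r: "r > 0" "h holomorphic_on ball 0 r"
    unfolding analytic_on_def by blast
  have Lpos: "L > 0" and Llt: "L < 1" using lam_pos lam_lt by (simp_all add: L_def)
  have lamL: "lam j = L" if "j \<in> {1..f}" for j using lam_eq that unfolding L_def by blast
  have rez: "Re (z j) \<le> 0" if "j \<in> {1..f}" for j
    using re_le that lamL[OF that] by (auto simp: z_def)
  have d1: "cmod (1 - z j) \<ge> 1" if "j \<in> {1..f}" for j
  proof -
    have "1 \<le> Re (1 - z j)" using rez[OF that] by simp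
    also have "\<dots> \<le> cmod (1 - z j)" by (rule complex_Re_le_cmod)
    finally show ?thesis .
  qed
  have Ppos: "P > 0" unfolding P_def
  proof (intro prod_pos)
    fix j assume "j \<in> {1..f}"
    from d1[OF this] Llt show "0 < cmod (1 - z j) - L" by linarith
  qed
  have Peq: "(\<Prod>j=1..f. cmod (1 - complex_of_real (lam j) * \<rho> - mu j) - lam j) = P"
    unfolding P_def by (intro prod.cong refl) (simp add: lamL z_def algebra_simps)
  have q0: "q \<ge> 0" using Ppos by (simp add: q_def)
  have qhalf: "q < 1/2" using small unfolding Peq q_def L_def by simp

  have "\<exists>k\<in>{1..n}. c k \<noteq> 0"
  proof (rule ccontr)
    assume "\<not> ?thesis"
    hence "(\<Sum>j=1..n. c j / s^j) = 0" for s by simp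
    hence ev: "\<forall>\<^sub>F s in at 0. G (\<rho> + s) = h s" using h_ev by (simp add: add.commute)
    have "is_pole (\<lambda>s. G (\<rho> + s)) 0" using pole is_pole_shift_0 G_def by blast
    hence "is_pole h 0" using is_pole_transform[OF _ ev] by blast
    moreover have "\<not> is_pole h 0" using not_is_pole_holomorphic[of "ball 0 r" 0 h] r by auto
    ultimately show False by blast
  qed
  then obtain k0 where k0: "k0 \<in> {1..n}" "c k0 \<noteq> 0" by blast
  have Cge: "cmod (c j) \<le> C" if "j \<in> {1..n}" for j using that by (auto simp: C_def intro!: Max_ge)
  have Cpos: "C > 0" using Cge[OF k0(1)] k0(2) by (meson less_le_trans zero_less_norm_iff)

  have shift: "G (s - of_nat l / of_real L) = exp (A * of_nat l / of_real L) * G s *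
      (\<Prod>j=1..f. \<Prod>m=1..l. inverse (of_real L * s + mu j - of_nat m))" for s l
  proof -
    have "G (s - of_nat l / of_real L) = exp (A * (1/2 - s) + A * of_nat l / of_real L) *
        (\<Prod>j=1..f. Gamma ((of_real L * s + mu j) - of_nat l))"
      unfolding G_def gfun_def A_def[symmetric]
    proof (rule arg_cong2[where f="(*)"])
      show "exp (A * (1 / 2 - (s - of_nat l / of_real L))) = exp (A * (1/2 - s) + A * of_nat l / of_real L)"
        by (simp add: algebra_simps)
      show "(\<Prod>j = 1..f. Gamma (complex_of_real (lam j) * (s - of_nat l / complex_of_real L) + mu j)) =
            (\<Prod>j=1..f. Gamma ((of_real L * s + mu j) - of_nat l))"
        using Lpos by (intro prod.cong refl) (simp add: lamL algebra_simps)
    qed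
    also have "\<dots> = exp (A * of_nat l / of_real L) * G s *
      (\<Prod>j=1..f. \<Prod>m=1..l. inverse (of_real L * s + mu j - of_nat m))"
    proof -
      have g: "(\<Prod>j=1..f. Gamma ((of_real L * s + mu j) - of_nat l)) = (\<Prod>j=1..f. Gamma (of_real (lam j) * s + mu j)) * (\<Prod>j=1..f. \<Prod>m=1..l. inverse (of_real L * s + mu j - of_nat m))"
        unfolding Gamma_shift prod.distrib[symmetric] by (intro prod.cong refl) (simp add: lamL)
      show ?thesis by (simp only: g exp_add G_def gfun_def A_def[symmetric] mult.assoc mult.left_commute)
    qed
    finally show ?thesis .
  qed
  have resbound: "cmod (residue G (\<rho> - of_nat (Suc l) / of_real L)) \<le> C * q ^ Suc l" for l
  proof -
    define l' where "l' = Suc l"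
    define E where "E = exp (A * of_nat l' / of_real L)"
    define w where "w = (\<lambda>(j,m). z j - of_nat m :: complex)"
    define I where "I = {1..f} \<times> {1..l'}"
    define R where "R = (\<lambda>t. \<Prod>i\<in>I. inverse (w i + of_real L * t))"
    have wbig: "\<forall>i\<in>I. cmod (w i) > L"
    proof
      fix i assume "i \<in> I"
      then obtain j m where i: "i = (j,m)" "j \<in> {1..f}" "m \<in> {1..l'}" by (auto simp: I_def)
      have "L < cmod (1 - z j)" using d1[OF i(2)] Llt by linarith
      also have "\<dots> \<le> cmod (w i)" using dist_shift[OF rez[OF i(2)], of m] i by (simp add: w_def)
      finally show "cmod (w i) > L" .
    qed
    have Rhol: "R holomorphic_on ball 0 1" unfolding R_def using prod_holo[OF Lpos wbig] .
    have Req: "(\<Prod>j=1..f. \<Prod>m=1..l'. inverse (of_real L * (\<rho> + t) + mu j - of_nat m)) = R t" for t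
      unfolding R_def I_def prod.cartesian_product
      by (intro prod.cong refl) (auto simp: w_def z_def algebra_simps)
    define S where "S = ball (0::complex) (min r 1)"
    have S: "open S" "0 \<in> S" using r by (auto simp: S_def)
    have hS: "h holomorphic_on S" using r(2) by (rule holomorphic_on_subset) (auto simp: S_def)
    have RS: "R holomorphic_on S" using Rhol by (rule holomorphic_on_subset) (auto simp: S_def)
    have "residue G (\<rho> - of_nat l' / of_real L) = residue (\<lambda>t. G (\<rho> - of_nat l' / of_real L + t)) 0"
      by (rule residue_shift_0)
    also have "\<dots> = residue (\<lambda>t. (\<Sum>k=1..n. (E * c k) * (R t / t ^ Suc (k-1))) + E * (h t * R t)) 0"
    proof (rule residue_cong)
      show "\<forall>\<^sub>F t in at 0. G (\<rho> - of_nat l' / of_real L + t) =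
          (\<Sum>k=1..n. (E * c k) * (R t / t ^ Suc (k-1))) + E * (h t * R t)"
        using h_ev
      proof (rule eventually_mono)
        fix t assume ht: "G (t + \<rho>) - (\<Sum>j=1..n. c j / t ^ j) = h t"
        have "G (\<rho> - of_nat l' / of_real L + t) = G ((\<rho> + t) - of_nat l' / of_real L)"
          by (simp add: algebra_simps)
        also have "\<dots> = E * G (\<rho> + t) * R t" unfolding shift E_def Req ..
        also have "G (\<rho> + t) = (\<Sum>j=1..n. c j / t ^ j) + h t" by (metis ht add.commute diff_eq_eq)
        also have "E * ((\<Sum>j=1..n. c j / t ^ j) + h t) * R t =
            (\<Sum>k=1..n. (E * c k) * (R t / t ^ Suc (k-1))) + E * (h t * R t)"
          by (simp add: algebra_simps sum_distrib_left sum_distrib_right)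
        finally show "G (\<rho> - of_nat l' / of_real L + t) =
          (\<Sum>k=1..n. (E * c k) * (R t / t ^ Suc (k-1))) + E * (h t * R t)" .
      qed
    qed simp
    also have "\<dots> = residue (\<lambda>t. \<Sum>k=1..n. (E * c k) * (R t / t ^ Suc (k-1))) 0 + residue (\<lambda>t. E * (h t * R t)) 0"
      using S hS RS by (intro residue_add[of S]) (auto intro!: holomorphic_intros holomorphic_on_sum
          intro: holomorphic_on_subset)
    also have "residue (\<lambda>t. E * (h t * R t)) 0 = 0"
      using S hS RS by (intro residue_holo[of S]) (auto intro!: holomorphic_intros)
    also have "residue (\<lambda>t. \<Sum>k=1..n. (E * c k) * (R t / t ^ Suc (k-1))) 0 =
        (\<Sum>k=1..n. residue (\<lambda>t. (E * c k) * (R t / t ^ Suc (k-1))) 0)"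
      using S RS by (intro residue_sum_gen) (auto intro!: holomorphic_intros intro: holomorphic_on_subset)
    also have "\<dots> = (\<Sum>k=1..n. E * (c k * cf (k-1) R))"
    proof (intro sum.cong refl)
      fix k assume "k \<in> {1..n}"
      have "residue (\<lambda>t. (E * c k) * (R t / t ^ Suc (k-1))) 0 = (E * c k) * residue (\<lambda>t. R t / t ^ Suc (k-1)) 0"
        using S RS by (intro residue_lmul[of S]) (auto intro!: holomorphic_intros intro: holomorphic_on_subset)
      also have "residue (\<lambda>t. R t / t ^ Suc (k-1)) 0 = cf (k-1) R"
        unfolding cf_def by (rule residue_holomorphic_over_power'[OF S RS])
      finally show "residue (\<lambda>t. (E * c k) * (R t / t ^ Suc (k-1))) 0 = E * (c k * cf (k-1) R)"
        by simp
    qed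
    finally have resid: "residue G (\<rho> - of_nat l' / of_real L) = E * (\<Sum>k=1..n. c k * cf (k-1) R)"
      by (simp add: sum_distrib_left)
    have "cmod (\<Sum>k=1..n. c k * cf (k-1) R) \<le> (\<Sum>k=1..n. C * cmod (cf (k-1) R))"
      by (rule order_trans[OF norm_sum sum_mono])
         (auto simp: norm_mult intro!: mult_right_mono Cge)
    also have "\<dots> = C * (\<Sum>k<n. cmod (cf k R))"
    proof -
      have "(\<Sum>k=1..n. cmod (cf (k-1) R)) = (\<Sum>k<n. cmod (cf k R))"
        using sum.atLeast1_atMost_eq[of "\<lambda>k. cmod (cf (k-1) R)" n] by simp
      thus ?thesis by (simp only: sum_distrib_left[symmetric])
    qed
    also have "\<dots> \<le> C * (\<Prod>i\<in>I. 1 / (cmod (w i) - L))"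
    proof (rule mult_left_mono)
      show "(\<Sum>k<n. cmod (cf k R)) \<le> (\<Prod>i\<in>I. 1 / (cmod (w i) - L))"
        unfolding R_def by (rule prod_bound) (use wbig Lpos in \<open>auto simp: I_def\<close>)
    qed (use Cpos in simp)
    also have "\<dots> \<le> C * (\<Prod>i\<in>I. 1 / (cmod (1 - z (fst i)) - L))"
    proof (intro mult_left_mono prod_mono conjI)
      fix i assume "i \<in> I"
      then obtain j m where i: "i = (j,m)" "j \<in> {1..f}" "m \<in> {1..l'}" by (auto simp: I_def)
      have a: "L < cmod (1 - z j)" using d1[OF i(2)] Llt by linarith
      have b: "cmod (1 - z j) \<le> cmod (w i)" using dist_shift[OF rez[OF i(2)], of m] i by (simp add: w_def)
      show "0 \<le> 1 / (cmod (w i) - L)" using a b by simp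
      show "1 / (cmod (w i) - L) \<le> 1 / (cmod (1 - z (fst i)) - L)"
        using a b i by (simp add: frac_le)
    qed (use Cpos in simp)
    also have "(\<Prod>i\<in>I. 1 / (cmod (1 - z (fst i)) - L)) = (1 / P) ^ l'"
    proof -
      have "(\<Prod>i\<in>I. 1 / (cmod (1 - z (fst i)) - L)) = (\<Prod>j=1..f. \<Prod>m=1..l'. 1 / (cmod (1 - z j) - L))"
        unfolding I_def prod.cartesian_product by (intro prod.cong refl) auto
      also have "\<dots> = (\<Prod>j=1..f. (1 / (cmod (1 - z j) - L)) ^ l')" by simp
      also have "\<dots> = (1 / P) ^ l'" unfolding P_def prod_power_distrib[symmetric] by (simp add: prod_dividef)
      finally show ?thesis .
    qed
    finally have sb: "cmod (\<Sum>k=1..n. c k * cf (k-1) R) \<le> C * (1 / P) ^ l'" .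
    have normE: "cmod E = exp (u / L) ^ l'"
      unfolding E_def norm_exp_eq_Re A_def using Lpos
      by (simp add: exp_of_nat_mult[symmetric] field_simps)
    have "cmod (residue G (\<rho> - of_nat l' / of_real L)) \<le> exp (u / L) ^ l' * (C * (1 / P) ^ l')"
      unfolding resid norm_mult normE by (intro mult_left_mono sb) simp
    also have "\<dots> = C * q ^ l'" by (simp add: q_def power_divide field_simps)
    finally show ?thesis unfolding l'_def .
  qed
  define res where "res l = residue G (\<rho> - of_nat (Suc l) / of_real L)" for l
  have q1: "q < 1" using qhalf by simp
  have gs: "summable (\<lambda>l. C * q * q ^ l)"
    using q0 q1 by (intro summable_mult summable_geometric) simp
  have bnd: "norm (res l) \<le> C * q * q ^ l" for l
    using resbound[of l] by (simp add: res_def mult.assoc)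
  have sn: "summable (\<lambda>l. norm (res l))"
    by (rule summable_comparison_test[OF _ gs]) (use bnd in auto)
  have s: "summable res" using sn by (rule summable_norm_cancel)
  have "norm (suminf res) \<le> (\<Sum>l. norm (res l))" by (rule summable_norm[OF sn])
  also have "\<dots> \<le> (\<Sum>l. C * q * q ^ l)" by (rule suminf_le[OF bnd sn gs])
  also have "\<dots> = C * q * (1 / (1 - q))"
    using q0 q1 by (subst suminf_mult) (simp_all add: suminf_geometric)
  also have "\<dots> < C" using Cpos q0 qhalf by (simp add: field_simps)
  finally have "norm (suminf res) < C" .
  with s show ?thesis unfolding res_def G_def L_def C_def by simp
qed

end
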